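(* The metric space $(\mathcal M_{\mathcal G,\Gamma},\mathrm m_{\mathcal G,\Gamma})$ is separable.
   Context: $(X,\Sigma,\mu)$ is a separable Lebesgue space with a non-atomic probability measure $\mu$. $\mathcal A$ is the group of invertible measure-preserving transformations of $X$, two transformations being identified if they agree outside a null set. Fix a countable family $\{A_i\}_{i\in\mathbb N}\subset\Sigma$ that generates $\Sigma$ and is dense in $\Sigma$ (for every $A\in\Sigma$ and $\varepsilon>0$ there is $i$ with $\mu(A_i\triangle A)<\varepsilon$). For $T,S\in\mathcal A$ put $\mathrm d(T,S)=\sum_{i}2^{-i}\big(\mu(TA_i\triangle SA_i)+\mu(T^{-1}A_i\triangle S^{-1}A_i)\big)$ and $\mathrm a(T,S)=\sum_{i,j}2^{-(i+j)}|\mu(TA_i\cap A_j)-\mu(SA_i\cap A_j)|$. $\mathcal G$ is a Hausdorff locally compact group with a countable neighborhood base, with identity $e$. Fix an at most countable family $\{K_i\}$ of compact subsets of $\mathcal G$ with nonempty interiors whose union contains a set generating $\mathcal G$. An action of $\mathcal G$ is a family $T=\{T^g\}_{g\in\mathcal G}\subset\mathcal A$ with $T^gT^h=T^{gh}$ for all $g,h\in\mathcal G$ and such that $g\mapsto\mu(T^gA\cap B)$ is continuous on $\mathcal G$ for all $A,B\in\Sigma$. $\mathcal A_{\mathcal G}$ is the set of all actions, and $\mathrm d_{\mathcal G}(T,S)=\sum_i 2^{-i}\sup_{g\in K_i}\mathrm d(T^g,S^g)$. Let $\Gamma\subset\mathcal G$ be an unbounded subset (not contained in any compact set). An action $T$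 is $\Gamma$-mixing if for all $A,B\in\Sigma$ and $\varepsilon>0$ there is a compact $C\subset\mathcal G$ with $|\mu(T^gA\cap B)-\mu(A)\mu(B)|<\varepsilon$ for all $g\in\Gamma\setminus C$. $\mathcal M_{\mathcal G,\Gamma}$ is the set of all $\Gamma$-mixing actions of $\mathcal G$, equipped with the (leash) metric $\mathrm m_{\mathcal G,\Gamma}(T,S)=\mathrm d_{\mathcal G}(T,S)+\sup_{g\in\Gamma}\mathrm a(T^g,S^g)$. *)

theory Defs
  imports "HOL-Probability.Probability"
begin

definition symdiff :: "'a set \<Rightarrow> 'a set \<Rightarrow> 'a set" where
  "symdiff A B = (A - B) \<union> (B - A)"

definition unit_interval_measure :: "real measure" where
  "unit_interval_measure = restrict_space lborel {0..1}"

definition nonatomic :: "'a measure \<Rightarrow> bool" where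
  "nonatomic M \<longleftrightarrow> (\<forall>A\<in>sets M. measure M A > 0 \<longrightarrow>
      (\<exists>B\<in>sets M. B \<subseteq> A \<and> 0 < measure M B \<and> measure M B < measure M A))"

text \<open>Non-atomic (separable) Lebesgue probability space: isomorphic mod 0 to the unit
  interval with Lebesgue measure (Rokhlin).\<close>
definition lebesgue_space :: "'a measure \<Rightarrow> bool" where
  "lebesgue_space M \<longleftrightarrow> prob_space M \<and>
    (\<exists>N N' \<phi> \<psi>. N \<in> null_sets M \<and> N' \<in> null_sets unit_interval_measure \<and>
       \<phi> \<in> measurable M unit_interval_measure \<and> \<psi> \<in> measurable unit_interval_measure M \<and>
       distr M unit_interval_measure \<phi> = unit_interval_measure \<and>
       (\<forall>x\<in>space M - N. \<phi> x \<in> {0..1} - N' \<and> \<psi> (\<phi> x) = x) \<and>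
       (\<forall>y\<in>{0..1} - N'. \<psi> y \<in> space M - N \<and> \<phi> (\<psi> y) = y))"

text \<open>An element of the group of invertible measure-preserving transformations is represented
  by a pair (T, T') of a transformation T and its (a.e.) inverse T'.\<close>
type_synonym 'a mpt = "('a \<Rightarrow> 'a) \<times> ('a \<Rightarrow> 'a)"

definition is_mpt :: "'a measure \<Rightarrow> 'a mpt \<Rightarrow> bool" where
  "is_mpt M P \<longleftrightarrow> fst P \<in> measurable M M \<and> snd P \<in> measurable M M \<and>
     distr M M (fst P) = M \<and> distr M M (snd P) = M \<and>
     (AE x in M. snd P (fst P x) = x) \<and> (AE x in M. fst P (snd P x) = x)"

definition mpt_eq :: "'a measure \<Rightarrow> 'a mpt \<Rightarrow> 'a mpt \<Rightarrow> bool" where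
  "mpt_eq M P Q \<longleftrightarrow> (AE x in M. fst P x = fst Q x)"

definition mpt_comp :: "'a mpt \<Rightarrow> 'a mpt \<Rightarrow> 'a mpt" where
  "mpt_comp P Q = (fst P \<circ> fst Q, snd Q \<circ> snd P)"

text \<open>Image T A (= preimage under the inverse) and preimage T^{-1} A.\<close>
definition mpt_img :: "'a measure \<Rightarrow> 'a mpt \<Rightarrow> 'a set \<Rightarrow> 'a set" where
  "mpt_img M P A = snd P -` A \<inter> space M"

definition mpt_preimg :: "'a measure \<Rightarrow> 'a mpt \<Rightarrow> 'a set \<Rightarrow> 'a set" where
  "mpt_preimg M P A = fst P -` A \<inter> space M"

definition dist_d :: "'a measure \<Rightarrow> (nat \<Rightarrow> 'a set) \<Rightarrow> 'a mpt \<Rightarrow> 'a mpt \<Rightarrow> real" where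
  "dist_d M A P Q = (\<Sum>i. (1/2)^i *
     (measure M (symdiff (mpt_img M P (A i)) (mpt_img M Q (A i))) +
      measure M (symdiff (mpt_preimg M P (A i)) (mpt_preimg M Q (A i)))))"

definition dist_a :: "'a measure \<Rightarrow> (nat \<Rightarrow> 'a set) \<Rightarrow> 'a mpt \<Rightarrow> 'a mpt \<Rightarrow> real" where
  "dist_a M A P Q = (\<Sum>i. \<Sum>j. (1/2)^(i+j) *
     \<bar>measure M (mpt_img M P (A i) \<inter> A j) - measure M (mpt_img M Q (A i) \<inter> A j)\<bar>)"

text \<open>The group G is written additively (not necessarily commutative).\<close>
definition generates_group :: "'g::group_add set \<Rightarrow> bool" where
  "generates_group S \<longleftrightarrow> (\<forall>H. 0 \<in> H \<and> (\<forall>x\<in>H. \<forall>y\<in>H. x + y \<in> H) \<and> (\<forall>x\<in>H. - x \<in> H)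
      \<and> S \<subseteq> H \<longrightarrow> H = UNIV)"

definition is_action :: "'a measure \<Rightarrow> ('g::topological_group_add \<Rightarrow> 'a mpt) \<Rightarrow> bool" where
  "is_action M T \<longleftrightarrow> (\<forall>g. is_mpt M (T g)) \<and>
     (\<forall>g h. mpt_eq M (mpt_comp (T g) (T h)) (T (g + h))) \<and>
     (\<forall>A\<in>sets M. \<forall>B\<in>sets M. continuous_on UNIV (\<lambda>g. measure M (mpt_img M (T g) A \<inter> B)))"

definition is_mixing :: "'a measure \<Rightarrow> 'g::topological_group_add set \<Rightarrow> ('g \<Rightarrow> 'a mpt) \<Rightarrow> bool" where
  "is_mixing M \<Gamma> T \<longleftrightarrow> (\<forall>A\<in>sets M. \<forall>B\<in>sets M. \<forall>\<epsilon>>0. \<exists>C. compact C \<and>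
     (\<forall>g\<in>\<Gamma> - C. \<bar>measure M (mpt_img M (T g) A \<inter> B) - measure M A * measure M B\<bar> < \<epsilon>))"

definition mixing_actions :: "'a measure \<Rightarrow> 'g::topological_group_add set \<Rightarrow> ('g \<Rightarrow> 'a mpt) set" where
  "mixing_actions M \<Gamma> = {T. is_action M T \<and> is_mixing M \<Gamma> T}"

text \<open>d_G, with the compact family K indexed by an at most countable index set I.\<close>
definition dist_dG :: "'a measure \<Rightarrow> (nat \<Rightarrow> 'a set) \<Rightarrow> (nat \<Rightarrow> 'g set) \<Rightarrow> nat set
    \<Rightarrow> ('g \<Rightarrow> 'a mpt) \<Rightarrow> ('g \<Rightarrow> 'a mpt) \<Rightarrow> real" where
  "dist_dG M A K I T S = (\<Sum>i. if i \<in> I then (1/2)^i * (SUP g\<in>K i. dist_d M A (T g) (S g)) else 0)"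

definition dist_m :: "'a measure \<Rightarrow> (nat \<Rightarrow> 'a set) \<Rightarrow> (nat \<Rightarrow> 'g set) \<Rightarrow> nat set \<Rightarrow> 'g set
    \<Rightarrow> ('g \<Rightarrow> 'a mpt) \<Rightarrow> ('g \<Rightarrow> 'a mpt) \<Rightarrow> real" where
  "dist_m M A K I \<Gamma> T S = dist_dG M A K I T S + (SUP g\<in>\<Gamma>. dist_a M A (T g) (S g))"

end

theory Submission
  imports Defs
begin


lemma open_translate:
  fixes x :: "'g::topological_group_add"
  assumes "open U" shows "open ((+) x ` U)"
proof -
  have "(+) x ` U = (\<lambda>y. -x + y) -` U"
  proof (intro set_eqI iffI)
    fix y assume "y \<in> (+) x ` U" thus "y \<in> (\<lambda>y. -x + y) -` U" by (auto simp: add.assoc[symmetric])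
  next
    fix y assume "y \<in> (\<lambda>y. -x + y) -` U"
    hence "x + (-x + y) \<in> (+) x ` U" by blast
    thus "y \<in> (+) x ` U" by (simp add: add.assoc[symmetric])
  qed
  moreover have "open ((\<lambda>y. -x + y) -` U)"
    by (intro open_vimage assms continuous_intros)
  ultimately show ?thesis by simp
qed

lemma countable_base_from_sigma_compact:
  fixes W :: "nat \<Rightarrow> 'g::{topological_group_add, first_countable_topology} set"
  assumes W: "\<And>k. compact (W k)" "(\<Union>k. W k) = UNIV"
  shows "\<exists>\<B>::'g set set. countable \<B> \<and> (\<forall>B\<in>\<B>. open B) \<and>
           (\<forall>Op g. open Op \<longrightarrow> g \<in> Op \<longrightarrow> (\<exists>B\<in>\<B>. g \<in> B \<and> B \<subseteq> Op))"
proof -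
  obtain U :: "nat \<Rightarrow> 'g set" where U: "\<And>i. (0::'g) \<in> U i \<and> open (U i)"
    and Ub: "\<And>S. open S \<Longrightarrow> (0::'g) \<in> S \<Longrightarrow> \<exists>i. U i \<subseteq> S"
    using first_countable_basis[of "0::'g"] by metis
  have ex: "\<exists>F. F \<subseteq> W k \<and> finite F \<and> W k \<subseteq> (\<Union>x\<in>F. (+) x ` U n)" for k n
  proof -
    have cov: "W k \<subseteq> (\<Union>x\<in>W k. (+) x ` U n)"
    proof
      fix y assume "y \<in> W k"
      moreover have "y = y + 0" by simp
      ultimately show "y \<in> (\<Union>x\<in>W k. (+) x ` U n)" using U[of n] by blast
    qed
    have op: "open ((+) x ` U n)" for x using open_translate U by blast
    obtain C' where "C' \<subseteq> W k" "finite C'" "W k \<subseteq> (\<Union>c\<in>C'. (+) c ` U n)"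
      using compactE_image[OF W(1)[of k] op cov] by blast
    then show ?thesis by blast
  qed
  define F where "F k n = (SOME F. F \<subseteq> W k \<and> finite F \<and> W k \<subseteq> (\<Union>x\<in>F. (+) x ` U n))" for k n
  have F: "F k n \<subseteq> W k \<and> finite (F k n) \<and> W k \<subseteq> (\<Union>x\<in>F k n. (+) x ` U n)" for k n
    unfolding F_def by (rule someI_ex[OF ex])
  define \<B> where "\<B> = (\<lambda>(k,n,x). (+) x ` U n) ` (SIGMA k:UNIV. SIGMA n:UNIV. F k n)"
  have "countable \<B>"
    unfolding \<B>_def using F by (intro countable_image countable_SIGMA) (auto intro: countable_finite)
  moreover have "\<forall>B\<in>\<B>. open B"
    unfolding \<B>_def using U open_translate by auto
  moreover have "\<exists>B\<in>\<B>. g \<in> B \<and> B \<subseteq> Op" if Op: "open Op" "g \<in> Op" for Op g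
  proof -
    define \<phi> where "\<phi> = (\<lambda>p::'g\<times>'g. g + (- fst p + snd p))"
    have o1: "open (\<phi> -` Op)"
      unfolding \<phi>_def by (intro open_vimage Op continuous_intros)
    have o2: "(0,0) \<in> \<phi> -` Op" using Op by (simp add: \<phi>_def)
    obtain S1 S2 where S: "open S1" "open S2" "(0,0) \<in> S1 \<times> S2" "S1 \<times> S2 \<subseteq> \<phi> -` Op"
      by (rule open_prod_elim[OF o1 o2])
    then obtain n where n: "U n \<subseteq> S1 \<inter> S2" using Ub[of "S1 \<inter> S2"] by auto
    obtain k where k: "g \<in> W k" using W(2) by auto
    then obtain x where x: "x \<in> F k n" "g \<in> (+) x ` U n" using F[of k n] k by blast
    then obtain u where u: "u \<in> U n" "g = x + u" by auto
    have "(+) x ` U n \<subseteq> Op"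
    proof
      fix y assume "y \<in> (+) x ` U n"
      then obtain v where v: "v \<in> U n" "y = x + v" by auto
      have "(u, v) \<in> S1 \<times> S2" using n u v by auto
      hence "\<phi> (u, v) \<in> Op" using S by auto
      moreover have "\<phi> (u,v) = y" unfolding \<phi>_def using u v
        by (simp add: add.assoc)
      ultimately show "y \<in> Op" by simp
    qed
    moreover have "g \<in> (+) x ` U n" using x(2) .
    moreover have "(+) x ` U n \<in> \<B>" unfolding \<B>_def
      by (rule image_eqI[where x="(k,n,x)"]) (use x in auto)
    ultimately show ?thesis by (intro bexI[of _ "(+) x ` U n"] conjI)
  qed
  ultimately show ?thesis
    apply -
    apply (rule exI[where x=\<B>])
    by blast
qed




lemma sigma_compact_from_gen:
  fixes K :: "nat \<Rightarrow> 'g::topological_group_add set"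
  assumes Kc: "\<forall>i\<in>I. compact (K i)" and gen: "\<exists>S. S \<subseteq> (\<Union>i\<in>I. K i) \<and> generates_group S"
  shows "\<exists>W::nat \<Rightarrow> 'g set. (\<forall>k. compact (W k)) \<and> (\<Union>k. W k) = UNIV"
proof -
  define L where "L k = insert 0 (\<Union>i\<in>I\<inter>{..k}. K i \<union> uminus ` K i)" for k
  have Lc: "compact (L k)" for k
  proof -
    have "compact (K i \<union> uminus ` K i)" if "i \<in> I" for i
      using Kc that by (intro compact_Un compact_continuous_image continuous_intros) auto
    then show ?thesis unfolding L_def by (intro compact_insert compact_UN) auto
  qed
  have Lmono: "k \<le> m \<Longrightarrow> L k \<subseteq> L m" for k m unfolding L_def by auto
  have Lneg: "l \<in> L k \<Longrightarrow> -l \<in> L k" for l k unfolding L_def by auto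
  define W where "W = rec_nat {0::'g} (\<lambda>k Wk. (\<lambda>p. fst p + snd p) ` (Wk \<times> L k))"
  have W0: "W 0 = {0}" and WS: "W (Suc k) = (\<lambda>p. fst p + snd p) ` (W k \<times> L k)" for k
    unfolding W_def by simp_all
  have Wc: "compact (W k)" for k
  proof (induction k)
    case 0 show ?case by (simp add: W0)
  next
    case (Suc k)
    show ?case unfolding WS
      by (intro compact_continuous_image compact_Times Suc Lc continuous_intros)
  qed
  have WSI: "b \<in> W m \<Longrightarrow> l \<in> L m \<Longrightarrow> b + l \<in> W (Suc m)" for b l m
    unfolding WS by (rule image_eqI[where x="(b,l)"]) auto
  have WSE: "c \<in> W (Suc m) \<Longrightarrow> \<exists>b l. b \<in> W m \<and> l \<in> L m \<and> c = b + l" for c m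
    unfolding WS by auto
  have add: "a \<in> W k \<Longrightarrow> b \<in> W m \<Longrightarrow> a + b \<in> W (k + m)" for a b k m
  proof (induction m arbitrary: b)
    case 0 then show ?case by (simp add: W0)
  next
    case (Suc m)
    then obtain b' l where bl: "b' \<in> W m" "l \<in> L m" "b = b' + l" using WSE by blast
    have "a + b' \<in> W (k + m)" using Suc bl by blast
    moreover have "l \<in> L (k + m)" using bl Lmono[of m "k+m"] by auto
    ultimately have "(a + b') + l \<in> W (Suc (k + m))" by (rule WSI)
    then show ?case using bl by (simp add: add.assoc)
  qed
  have zW: "0 \<in> W m" for m
  proof (induction m)
    case 0 show ?case by (simp add: W0)
  next
    case (Suc m)
    have "0 \<in> L m" unfolding L_def by simp
    from WSI[OF Suc this] show ?case by simp
  qed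
  have LW: "l \<in> L m \<Longrightarrow> l \<in> W (Suc m)" for l m
    using WSI[OF zW, of l m] by simp
  define H where "H = (\<Union>k. W k)"
  have neg: "b \<in> W m \<Longrightarrow> -b \<in> H" for b m
  proof (induction m arbitrary: b)
    case 0 then show ?case using zW by (auto simp: W0 H_def)
  next
    case (Suc m)
    then obtain b' l where bl: "b' \<in> W m" "l \<in> L m" "b = b' + l" using WSE by blast
    obtain j where j: "-b' \<in> W j" using Suc bl unfolding H_def by blast
    have "-l \<in> W (Suc m)" using LW Lneg bl by blast
    from add[OF this j] have "-l + -b' \<in> H" unfolding H_def by blast
    then show ?case using bl by (simp add: minus_add)
  qed
  obtain S where S: "S \<subseteq> (\<Union>i\<in>I. K i)" "generates_group S" using gen by blast
  have "H = UNIV"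
  proof (rule S(2)[unfolded generates_group_def, rule_format])
    show "0 \<in> H \<and> (\<forall>x\<in>H. \<forall>y\<in>H. x + y \<in> H) \<and> (\<forall>x\<in>H. - x \<in> H) \<and> S \<subseteq> H"
    proof (intro conjI ballI subsetI)
      show "0 \<in> H" unfolding H_def using W0 by blast
    next
      fix x y assume "x \<in> H" "y \<in> H"
      then obtain k m where "x \<in> W k" "y \<in> W m" unfolding H_def by blast
      from add[OF this] show "x + y \<in> H" unfolding H_def by blast
    next
      fix x assume "x \<in> H"
      then obtain k where "x \<in> W k" unfolding H_def by blast
      from neg[OF this] show "-x \<in> H" .
    next
      fix s assume "s \<in> S"
      then obtain i where "i \<in> I" "s \<in> K i" using S by blast
      then have "s \<in> L i" unfolding L_def by blast
      from LW[OF this] show "s \<in> H" unfolding H_def by blast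
    qed
  qed
  then have "(\<Union>k. W k) = UNIV" unfolding H_def .
  then show ?thesis using Wc by (intro exI[where x=W] conjI allI) auto
qed




context prob_space
begin

lemma img_sets: "is_mpt M P \<Longrightarrow> B \<in> sets M \<Longrightarrow> mpt_img M P B \<in> sets M"
  unfolding is_mpt_def mpt_img_def by (auto intro: measurable_sets)

lemma preimg_sets: "is_mpt M P \<Longrightarrow> B \<in> sets M \<Longrightarrow> mpt_preimg M P B \<in> sets M"
  unfolding is_mpt_def mpt_preimg_def by (auto intro: measurable_sets)

lemma img_measure: assumes "is_mpt M P" "B \<in> sets M" shows "measure M (mpt_img M P B) = measure M B"
proof -
  have m: "snd P \<in> measurable M M" and d: "distr M M (snd P) = M" using assms(1) unfolding is_mpt_def by auto
  have "measure M B = measure (distr M M (snd P)) B" using d by simp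
  also have "\<dots> = measure M (snd P -` B \<inter> space M)" by (rule measure_distr[OF m assms(2)])
  finally show ?thesis unfolding mpt_img_def by simp
qed

lemma preimg_measure: assumes "is_mpt M P" "B \<in> sets M" shows "measure M (mpt_preimg M P B) = measure M B"
proof -
  have m: "fst P \<in> measurable M M" and d: "distr M M (fst P) = M" using assms(1) unfolding is_mpt_def by auto
  have "measure M B = measure (distr M M (fst P)) B" using d by simp
  also have "\<dots> = measure M (fst P -` B \<inter> space M)" by (rule measure_distr[OF m assms(2)])
  finally show ?thesis unfolding mpt_preimg_def by simp
qed

lemma symdiff_measure:
  assumes "X \<in> sets M" "Y \<in> sets M"
  shows "measure M (symdiff X Y) = measure M X + measure M Y - 2 * measure M (X \<inter> Y)"
proof -
  have "measure M (symdiff X Y) = measure M (X - Y) + measure M (Y - X)"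
    unfolding symdiff_def using assms by (intro finite_measure_Union) auto
  also have "\<dots> = measure M X - measure M (X \<inter> Y) + (measure M Y - measure M (Y \<inter> X))"
    using assms by (simp add: finite_measure_Diff')
  finally show ?thesis by (simp add: Int_commute)
qed

lemma symdiff_tri:
  assumes "X \<in> sets M" "Y \<in> sets M" "Z \<in> sets M"
  shows "measure M (symdiff X Z) \<le> measure M (symdiff X Y) + measure M (symdiff Y Z)"
proof -
  have "symdiff X Z \<subseteq> symdiff X Y \<union> symdiff Y Z" unfolding symdiff_def by auto
  then have "measure M (symdiff X Z) \<le> measure M (symdiff X Y \<union> symdiff Y Z)"
    using assms by (intro finite_measure_mono) (auto simp: symdiff_def)
  also have "\<dots> \<le> measure M (symdiff X Y) + measure M (symdiff Y Z)"
    using assms by (intro measure_Un_le) (auto simp: symdiff_def)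
  finally show ?thesis .
qed

lemma symdiff_sym: "symdiff X Y = symdiff Y X"
  unfolding symdiff_def by auto

lemma inter_diff_le:
  assumes "X \<in> sets M" "Y \<in> sets M" "C \<in> sets M"
  shows "\<bar>measure M (X \<inter> C) - measure M (Y \<inter> C)\<bar> \<le> measure M (symdiff X Y)"
proof -
  have 1: "measure M (X \<inter> C) \<le> measure M (Y \<inter> C) + measure M (symdiff X Y)"
    if "X \<in> sets M" "Y \<in> sets M" for X Y
  proof -
    have "measure M (X \<inter> C) \<le> measure M ((Y \<inter> C) \<union> symdiff X Y)"
      using that assms by (intro finite_measure_mono) (auto simp: symdiff_def)
    also have "\<dots> \<le> measure M (Y \<inter> C) + measure M (symdiff X Y)"
      using that assms by (intro measure_Un_le) (auto simp: symdiff_def)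
    finally show ?thesis .
  qed
  show ?thesis using 1[of X Y] 1[of Y X] assms by (simp add: symdiff_sym abs_le_iff)
qed

lemma AE_pull_fst: assumes "is_mpt M P" "AE x in M. Q x" shows "AE x in M. Q (fst P x)"
proof -
  have m: "fst P \<in> measurable M M" and d: "distr M M (fst P) = M" using assms(1) unfolding is_mpt_def by auto
  have "AE x in distr M M (fst P). Q x" unfolding d by (rule assms(2))
  then show ?thesis by (rule AE_distrD[OF m])
qed

lemma AE_pull_snd: assumes "is_mpt M P" "AE x in M. Q x" shows "AE x in M. Q (snd P x)"
proof -
  have m: "snd P \<in> measurable M M" and d: "distr M M (snd P) = M" using assms(1) unfolding is_mpt_def by auto
  have "AE x in distr M M (snd P). Q x" unfolding d by (rule assms(2))
  then show ?thesis by (rule AE_distrD[OF m])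
qed

lemma action_inv:
  assumes T: "is_action M T"
  shows "AE x in M. fst (T h) x = snd (T (-h)) x"
proof -
  define P where "P g = fst (T g)" for g
  define Q where "Q g = snd (T g)" for g
  have mpt: "is_mpt M (T g)" for g using T unfolding is_action_def by blast
  have comp: "AE x in M. P g (P k x) = P (g + k) x" for g k
    using T unfolding is_action_def mpt_eq_def mpt_comp_def P_def by auto
  have QP: "AE x in M. Q g (P g x) = x" for g using mpt[of g] unfolding is_mpt_def P_def Q_def by blast
  have PQ: "AE x in M. P g (Q g x) = x" for g using mpt[of g] unfolding is_mpt_def P_def Q_def by blast
  have a: "AE x in M. P 0 (P 0 x) = P 0 x" using comp[of 0 0] by simp
  have b: "AE x in M. Q 0 (P 0 (P 0 x)) = P 0 x"
    using AE_pull_fst[OF mpt[of 0] QP[of 0]] unfolding P_def .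
  have P0: "AE x in M. P 0 x = x"
    using a b QP[of 0] by eventually_elim simp
  have s2: "AE x in M. P h (P (-h) x) = x"
    using comp[of h "-h"] P0 by eventually_elim simp
  have s3: "AE x in M. P h (P (-h) (Q (-h) x)) = Q (-h) x"
    using AE_pull_snd[OF mpt[of "-h"] s2] unfolding Q_def .
  have "AE x in M. P h x = Q (-h) x"
    using s3 PQ[of "-h"] by eventually_elim simp
  then show ?thesis unfolding P_def Q_def .
qed

lemma preimg_inter:
  assumes T: "is_action M T" and B: "B \<in> sets M" and C: "C \<in> sets M"
  shows "measure M (mpt_preimg M (T h) B \<inter> C) = measure M (mpt_img M (T (-h)) B \<inter> C)"
proof -
  have mpt: "is_mpt M (T g)" for g using T unfolding is_action_def by blast
  show ?thesis
  proof (rule measure_eq_AE)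
    show "AE x in M. (x \<in> mpt_preimg M (T h) B \<inter> C) = (x \<in> mpt_img M (T (- h)) B \<inter> C)"
      using action_inv[OF T, of h] by eventually_elim (auto simp: mpt_preimg_def mpt_img_def)
    show "mpt_preimg M (T h) B \<inter> C \<in> sets M" using preimg_sets[OF mpt B] C by blast
    show "mpt_img M (T (-h)) B \<inter> C \<in> sets M" using img_sets[OF mpt B] C by blast
  qed
qed

lemma img_cont:
  assumes T: "is_action M T" and B: "B \<in> sets M" and C: "C \<in> sets M"
  shows "continuous_on UNIV (\<lambda>h. measure M (symdiff (mpt_img M (T h) B) C))"
proof -
  have mpt: "is_mpt M (T g)" for g using T unfolding is_action_def by blast
  have f: "continuous_on UNIV (\<lambda>g. measure M (mpt_img M (T g) B \<inter> C))"
    using T B C unfolding is_action_def by blast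
  have eq: "measure M (symdiff (mpt_img M (T h) B) C) = measure M B + measure M C - 2 * measure M (mpt_img M (T h) B \<inter> C)" for h
    using symdiff_measure[OF img_sets[OF mpt B] C] img_measure[OF mpt B] by simp
  show ?thesis unfolding eq by (intro continuous_intros f)
qed

lemma preimg_cont:
  assumes T: "is_action M T" and B: "B \<in> sets M" and C: "C \<in> sets M"
  shows "continuous_on UNIV (\<lambda>h. measure M (symdiff (mpt_preimg M (T h) B) C))"
proof -
  have mpt: "is_mpt M (T g)" for g using T unfolding is_action_def by blast
  have f: "continuous_on UNIV (\<lambda>g. measure M (mpt_img M (T g) B \<inter> C))"
    using T B C unfolding is_action_def by blast
  have f2: "continuous_on UNIV (\<lambda>g. measure M (mpt_img M (T (-g)) B \<inter> C))"
    by (rule continuous_on_compose2[OF f]) (auto intro: continuous_intros)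
  have eq: "measure M (symdiff (mpt_preimg M (T h) B) C) = measure M B + measure M C - 2 * measure M (mpt_img M (T (-h)) B \<inter> C)" for h
    using symdiff_measure[OF preimg_sets[OF mpt B] C] preimg_measure[OF mpt B] preimg_inter[OF T B C] by simp
  show ?thesis unfolding eq by (intro continuous_intros f2)
qed

end




lemma geo_half: "summable (\<lambda>n. (1/2::real)^n)" "(\<Sum>n. (1/2::real)^n) = 2"
  using summable_geometric[of "1/2::real"] suminf_geometric[of "1/2::real"] by auto

lemma series_bound:
  fixes f :: "nat \<Rightarrow> real"
  assumes fb: "\<And>n. 0 \<le> f n \<and> f n \<le> c" and fe: "\<And>n. n \<le> N \<Longrightarrow> f n \<le> e"
  shows "summable (\<lambda>n. (1/2)^n * f n)" "(\<Sum>n. (1/2)^n * f n) \<le> 2*e + c*(1/2)^N"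
    "0 \<le> (\<Sum>n. (1/2)^n * f n)" "(\<Sum>n. (1/2)^n * f n) \<le> 2*c"
proof -
  have cg: "summable (\<lambda>n. c * (1/2::real)^n)" using geo_half by (intro summable_mult)
  show sm: "summable (\<lambda>n. (1/2)^n * f n)"
  proof (rule summable_comparison_test'[OF cg])
    fix n show "norm ((1/2)^n * f n) \<le> c * (1/2)^n" using fb[of n] by (simp add: mult.commute)
  qed
  show "0 \<le> (\<Sum>n. (1/2)^n * f n)" using sm fb by (intro suminf_nonneg) auto
  have "(\<Sum>n. (1/2)^n * f n) \<le> (\<Sum>n. c * (1/2)^n)"
    using sm cg fb by (intro suminf_le) (auto simp: mult.commute)
  also have "\<dots> = 2 * c" using suminf_mult[OF geo_half(1), of c] geo_half(2) by simp
  finally show "(\<Sum>n. (1/2)^n * f n) \<le> 2*c" .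
  define k where "k = Suc N"
  have e0: "0 \<le> e" using fb[of 0] fe[of 0] by auto
  have split: "(\<Sum>n. (1/2)^n * f n) = (\<Sum>n. (1/2)^(n+k) * f (n+k)) + (\<Sum>i<k. (1/2)^i * f i)"
    using suminf_split_initial_segment[OF sm, of k] by simp
  have sm2: "summable (\<lambda>n. (1/2)^(n+k) * f (n+k))"
    using summable_ignore_initial_segment[OF sm, of k] by simp
  have cg2: "summable (\<lambda>n. c * (1/2)^k * (1/2::real)^n)" using geo_half by (intro summable_mult)
  have "(\<Sum>n. (1/2)^(n+k) * f (n+k)) \<le> (\<Sum>n. c * (1/2)^k * (1/2)^n)"
  proof (rule suminf_le[OF _ sm2 cg2])
    fix n have "(1/2::real)^(n+k) * f (n+k) \<le> (1/2)^(n+k) * c"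
      using fb[of "n+k"] by (intro mult_left_mono) auto
    then show "(1/2::real)^(n+k) * f (n+k) \<le> c * (1/2)^k * (1/2)^n"
      by (simp add: power_add mult_ac)
  qed
  also have "\<dots> = c * (1/2)^k * 2" using suminf_mult[OF geo_half(1), of "c * (1/2)^k"] geo_half(2) by simp
  also have "\<dots> = c * (1/2)^N" by (simp add: k_def)
  finally have t1: "(\<Sum>n. (1/2)^(n+k) * f (n+k)) \<le> c * (1/2)^N" .
  have "(\<Sum>i<k. (1/2::real)^i * f i) \<le> (\<Sum>i<k. (1/2)^i * e)"
    using fe by (intro sum_mono mult_left_mono) (auto simp: k_def)
  also have "\<dots> = e * (\<Sum>i<k. (1/2::real)^i)" by (simp add: sum_distrib_left mult.commute)
  also have "(\<Sum>i<k. (1/2::real)^i) = 2 * (1 - (1/2)^k)" by (simp add: sum_gp_strict)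
  also have "e * (2 * (1 - (1/2::real)^k)) \<le> 2 * e" using e0 by (simp add: algebra_simps)
  finally have t2: "(\<Sum>i<k. (1/2::real)^i * f i) \<le> 2 * e" .
  show "(\<Sum>n. (1/2)^n * f n) \<le> 2*e + c*(1/2)^N" using split t1 t2 by linarith
qed

lemma series_basic:
  fixes f :: "nat \<Rightarrow> real"
  assumes fb: "\<And>n. 0 \<le> f n \<and> f n \<le> c"
  shows "summable (\<lambda>n. (1/2)^n * f n)" "0 \<le> (\<Sum>n. (1/2)^n * f n)" "(\<Sum>n. (1/2)^n * f n) \<le> 2*c"
proof -
  have fe: "\<And>n. n \<le> 0 \<Longrightarrow> f n \<le> c" using fb by blast
  show "summable (\<lambda>n. (1/2)^n * f n)" "0 \<le> (\<Sum>n. (1/2)^n * f n)" "(\<Sum>n. (1/2)^n * f n) \<le> 2*c"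
    using series_bound[where f=f and c=c and N=0 and e=c, OF fb fe] by auto
qed

context prob_space
begin

lemma dist_d_bounds:
  assumes "\<And>n. n \<le> N \<Longrightarrow> measure M (symdiff (mpt_img M P (A n)) (mpt_img M Q (A n))) +
      measure M (symdiff (mpt_preimg M P (A n)) (mpt_preimg M Q (A n))) \<le> e"
  shows "dist_d M A P Q \<le> 2*e + 2*(1/2)^N"
proof -
  have fb: "0 \<le> measure M (symdiff (mpt_img M P (A n)) (mpt_img M Q (A n))) +
      measure M (symdiff (mpt_preimg M P (A n)) (mpt_preimg M Q (A n))) \<and>
      measure M (symdiff (mpt_img M P (A n)) (mpt_img M Q (A n))) +
      measure M (symdiff (mpt_preimg M P (A n)) (mpt_preimg M Q (A n))) \<le> 2" for n
    using prob_le_1 by (smt (verit) measure_nonneg)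
  show ?thesis unfolding dist_d_def by (rule series_bound(2)[OF fb assms])
qed

lemma dist_d_range: "0 \<le> dist_d M A P Q \<and> dist_d M A P Q \<le> 4"
proof -
  have fb: "0 \<le> measure M (symdiff (mpt_img M P (A n)) (mpt_img M Q (A n))) +
      measure M (symdiff (mpt_preimg M P (A n)) (mpt_preimg M Q (A n))) \<and>
      measure M (symdiff (mpt_img M P (A n)) (mpt_img M Q (A n))) +
      measure M (symdiff (mpt_preimg M P (A n)) (mpt_preimg M Q (A n))) \<le> 2" for n
    using prob_le_1 by (smt (verit) measure_nonneg)
  show ?thesis unfolding dist_d_def using series_basic(2,3)[where c=2, OF fb] fb[of 0] by auto
qed

lemma dist_a_bounds:
  assumes "\<And>n m. n \<le> N \<Longrightarrow> m \<le> N \<Longrightarrow>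
     \<bar>measure M (mpt_img M P (A n) \<inter> A m) - measure M (mpt_img M Q (A n) \<inter> A m)\<bar> \<le> e"
  shows "dist_a M A P Q \<le> 4*e + 4*(1/2)^N"
proof -
  define x where "x n m = \<bar>measure M (mpt_img M P (A n) \<inter> A m) - measure M (mpt_img M Q (A n) \<inter> A m)\<bar>" for n m
  have xb: "0 \<le> x n m \<and> x n m \<le> 1" for n m
    unfolding x_def using prob_le_1 by (smt (verit) measure_nonneg)
  define f where "f n = (\<Sum>m. (1/2)^m * x n m)" for n
  have inner: "(\<Sum>m. (1/2)^(n+m) * x n m) = (1/2)^n * f n" for n
  proof -
    have "summable (\<lambda>m. (1/2)^m * x n m)" using series_basic(1)[where f="x n" and c=1, OF xb[of n]] by blast
    from suminf_mult[OF this, of "(1/2)^n"] show ?thesis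
      unfolding f_def by (simp add: power_add mult_ac)
  qed
  have fb: "0 \<le> f n \<and> f n \<le> 2" for n
    using series_basic(2,3)[where f="x n" and c=1, OF xb[of n]] unfolding f_def by auto
  have fe: "f n \<le> 2*e + (1/2)^N" if "n \<le> N" for n
    using series_bound(2)[where f="x n" and c=1 and N=N and e=e, OF xb[of n]] assms[OF that] unfolding f_def x_def by simp
  have "dist_a M A P Q = (\<Sum>n. (1/2)^n * f n)"
    unfolding dist_a_def using inner unfolding x_def by simp
  also have "\<dots> \<le> 2 * (2*e + (1/2)^N) + 2 * (1/2)^N"
    by (rule series_bound(2)[where f=f and c=2, OF fb fe])
  finally show ?thesis by simp
qed

lemma dist_a_range: "0 \<le> dist_a M A P Q \<and> dist_a M A P Q \<le> 8"
proof -
  have "dist_a M A P Q \<le> 4*1 + 4*(1/2)^0"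
    by (rule dist_a_bounds) (use prob_le_1 in \<open>smt (verit) measure_nonneg\<close>)
  moreover have "0 \<le> dist_a M A P Q"
  proof -
    define x where "x n m = \<bar>measure M (mpt_img M P (A n) \<inter> A m) - measure M (mpt_img M Q (A n) \<inter> A m)\<bar>" for n m
    have xb: "0 \<le> x n m \<and> x n m \<le> 1" for n m
      unfolding x_def using prob_le_1 by (smt (verit) measure_nonneg)
    define f where "f n = (\<Sum>m. (1/2)^m * x n m)" for n
    have inner: "(\<Sum>m. (1/2)^(n+m) * x n m) = (1/2)^n * f n" for n
    proof -
      have "summable (\<lambda>m. (1/2)^m * x n m)" using series_basic(1)[where f="x n" and c=1, OF xb[of n]] by blast
      from suminf_mult[OF this, of "(1/2)^n"] show ?thesis
        unfolding f_def by (simp add: power_add mult_ac)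
    qed
    have fb: "0 \<le> f n \<and> f n \<le> 2" for n
      using series_basic(2,3)[where f="x n" and c=1, OF xb[of n]] unfolding f_def by auto
    have "dist_a M A P Q = (\<Sum>n. (1/2)^n * f n)"
      unfolding dist_a_def using inner unfolding x_def by simp
    then show ?thesis using series_basic(2)[where f=f and c=2, OF fb] by simp
  qed
  ultimately show ?thesis by simp
qed

end

lemma dist_dG_bound:
  fixes s :: "nat \<Rightarrow> real"
  assumes "\<And>i. i \<in> I \<Longrightarrow> 0 \<le> s i \<and> s i \<le> 4" "\<And>i. i \<in> I \<Longrightarrow> i \<le> N \<Longrightarrow> s i \<le> e" "0 \<le> e"
  shows "(\<Sum>i. if i \<in> I then (1/2)^i * s i else 0) \<le> 2*e + 4*(1/2)^N"
proof -
  define f where "f i = (if i \<in> I then s i else 0)" for i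
  have "(\<Sum>i. if i \<in> I then (1/2)^i * s i else 0) = (\<Sum>i. (1/2)^i * f i)"
    unfolding f_def by (intro suminf_cong) auto
  also have "\<dots> \<le> 2*e + 4*(1/2)^N"
    by (rule series_bound(2)) (use assms in \<open>auto simp: f_def\<close>)
  finally show ?thesis .
qed




definition Cov :: "('g set \<times> nat \<times> nat \<times> nat) set \<Rightarrow> nat \<Rightarrow> 'g set" where
  "Cov F N = {g. \<forall>n\<le>N. \<exists>B j j'. (B,n,j,j') \<in> F \<and> g \<in> B}"

definition cell :: "'a measure \<Rightarrow> (nat \<Rightarrow> 'a set) \<Rightarrow> (nat \<Rightarrow> 'g::topological_group_add set) \<Rightarrow> nat set \<Rightarrow> 'g set
   \<Rightarrow> nat \<Rightarrow> ('g set \<times> nat \<times> nat \<times> nat) set \<Rightarrow> ('g \<Rightarrow> 'a mpt) set" where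
  "cell M A K I \<Gamma> N F = {T \<in> mixing_actions M \<Gamma>.
     (\<forall>B n j j'. (B,n,j,j') \<in> F \<longrightarrow> (\<forall>h\<in>B. measure M (symdiff (mpt_img M (T h) (A n)) (A j)) < (1/2)^N \<and>
         measure M (symdiff (mpt_preimg M (T h) (A n)) (A j')) < (1/2)^N)) \<and>
     (\<forall>g\<in>\<Gamma> - Cov F N. \<forall>n\<le>N. \<forall>m\<le>N.
         \<bar>measure M (mpt_img M (T g) (A n) \<inter> A m) - measure M (A n) * measure M (A m)\<bar> < (1/2)^N) \<and>
     (\<forall>i\<in>I. i \<le> N \<longrightarrow> K i \<subseteq> Cov F N)}"

lemma cellD:
  assumes "T \<in> cell M A K I \<Gamma> N F"
  shows "T \<in> mixing_actions M \<Gamma>"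
    "\<And>B n j j' h. (B,n,j,j') \<in> F \<Longrightarrow> h \<in> B \<Longrightarrow> measure M (symdiff (mpt_img M (T h) (A n)) (A j)) < (1/2)^N"
    "\<And>B n j j' h. (B,n,j,j') \<in> F \<Longrightarrow> h \<in> B \<Longrightarrow> measure M (symdiff (mpt_preimg M (T h) (A n)) (A j')) < (1/2)^N"
    "\<And>g n m. g \<in> \<Gamma> \<Longrightarrow> g \<notin> Cov F N \<Longrightarrow> n \<le> N \<Longrightarrow> m \<le> N \<Longrightarrow>
      \<bar>measure M (mpt_img M (T g) (A n) \<inter> A m) - measure M (A n) * measure M (A m)\<bar> < (1/2)^N"
    "\<And>i. i \<in> I \<Longrightarrow> i \<le> N \<Longrightarrow> K i \<subseteq> Cov F N"
proof -
  have c: "T \<in> mixing_actions M \<Gamma> \<and>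
     (\<forall>B n j j'. (B,n,j,j') \<in> F \<longrightarrow> (\<forall>h\<in>B. measure M (symdiff (mpt_img M (T h) (A n)) (A j)) < (1/2)^N \<and>
         measure M (symdiff (mpt_preimg M (T h) (A n)) (A j')) < (1/2)^N)) \<and>
     (\<forall>g\<in>\<Gamma> - Cov F N. \<forall>n\<le>N. \<forall>m\<le>N.
         \<bar>measure M (mpt_img M (T g) (A n) \<inter> A m) - measure M (A n) * measure M (A m)\<bar> < (1/2)^N) \<and>
     (\<forall>i\<in>I. i \<le> N \<longrightarrow> K i \<subseteq> Cov F N)"
    using assms unfolding cell_def by (rule CollectD)
  show "T \<in> mixing_actions M \<Gamma>" using c by (rule conjunct1)
  show "\<And>B n j j' h. (B,n,j,j') \<in> F \<Longrightarrow> h \<in> B \<Longrightarrow> measure M (symdiff (mpt_img M (T h) (A n)) (A j)) < (1/2)^N"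
    using c by blast
  show "\<And>B n j j' h. (B,n,j,j') \<in> F \<Longrightarrow> h \<in> B \<Longrightarrow> measure M (symdiff (mpt_preimg M (T h) (A n)) (A j')) < (1/2)^N"
    using c by blast
  show "\<And>g n m. g \<in> \<Gamma> \<Longrightarrow> g \<notin> Cov F N \<Longrightarrow> n \<le> N \<Longrightarrow> m \<le> N \<Longrightarrow>
      \<bar>measure M (mpt_img M (T g) (A n) \<inter> A m) - measure M (A n) * measure M (A m)\<bar> < (1/2)^N"
    using c by blast
  show "\<And>i. i \<in> I \<Longrightarrow> i \<le> N \<Longrightarrow> K i \<subseteq> Cov F N" using c by blast
qed

lemma cell_diam:
  fixes K :: "nat \<Rightarrow> 'g::topological_group_add set"
  assumes P: "prob_space M" and Ar: "range A \<subseteq> sets M" and Kne: "\<forall>i\<in>I. K i \<noteq> {}"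
    and Gne: "\<Gamma> \<noteq> {}"
    and T: "T \<in> cell M A K I \<Gamma> N F" and S: "S \<in> cell M A K I \<Gamma> N F"
  shows "dist_m M A K I \<Gamma> T S \<le> 36 * (1/2)^N"
proof -
  interpret prob_space M by (rule P)
  define \<delta> :: real where "\<delta> = (1/2)^N"
  have d0: "0 < \<delta>" unfolding \<delta>_def by simp
  have An: "A n \<in> sets M" for n using Ar by auto
  note TD = cellD[OF T] and SD = cellD[OF S]
  have Tm: "is_mpt M (T g)" and Sm: "is_mpt M (S g)" for g
    using TD(1) SD(1) unfolding mixing_actions_def is_action_def by auto
  have Tgood: "\<And>B n j j' h. (B,n,j,j') \<in> F \<Longrightarrow> h \<in> B \<Longrightarrow>
      measure M (symdiff (mpt_img M (T h) (A n)) (A j)) < \<delta> \<and> measure M (symdiff (mpt_preimg M (T h) (A n)) (A j')) < \<delta>"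
    unfolding \<delta>_def using TD(2,3) by (intro conjI)
  have Sgood: "\<And>B n j j' h. (B,n,j,j') \<in> F \<Longrightarrow> h \<in> B \<Longrightarrow>
      measure M (symdiff (mpt_img M (S h) (A n)) (A j)) < \<delta> \<and> measure M (symdiff (mpt_preimg M (S h) (A n)) (A j')) < \<delta>"
    unfolding \<delta>_def using SD(2,3) by (intro conjI)
  have Tmix: "\<And>g n m. g \<in> \<Gamma> \<Longrightarrow> g \<notin> Cov F N \<Longrightarrow> n \<le> N \<Longrightarrow> m \<le> N \<Longrightarrow>
      \<bar>measure M (mpt_img M (T g) (A n) \<inter> A m) - measure M (A n) * measure M (A m)\<bar> < \<delta>"
    unfolding \<delta>_def by (rule TD(4))
  have Smix: "\<And>g n m. g \<in> \<Gamma> \<Longrightarrow> g \<notin> Cov F N \<Longrightarrow> n \<le> N \<Longrightarrow> m \<le> N \<Longrightarrow>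
      \<bar>measure M (mpt_img M (S g) (A n) \<inter> A m) - measure M (A n) * measure M (A m)\<bar> < \<delta>"
    unfolding \<delta>_def by (rule SD(4))
  have KC: "\<And>i. i \<in> I \<Longrightarrow> i \<le> N \<Longrightarrow> K i \<subseteq> Cov F N" by (rule TD(5))
  have close: "measure M (symdiff (mpt_img M (T g) (A n)) (mpt_img M (S g) (A n))) \<le> 2*\<delta> \<and>
      measure M (symdiff (mpt_preimg M (T g) (A n)) (mpt_preimg M (S g) (A n))) \<le> 2*\<delta>"
    if g: "g \<in> Cov F N" and n: "n \<le> N" for g n
  proof -
    obtain B j j' where Bj: "(B,n,j,j') \<in> F" "g \<in> B" using g n unfolding Cov_def by blast
    note t = Tgood[OF Bj] and s = Sgood[OF Bj]
    have a1: "measure M (symdiff (mpt_img M (T g) (A n)) (mpt_img M (S g) (A n)))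
        \<le> measure M (symdiff (mpt_img M (T g) (A n)) (A j)) + measure M (symdiff (A j) (mpt_img M (S g) (A n)))"
      by (intro symdiff_tri img_sets[OF Tm] img_sets[OF Sm] An)
    have a2: "measure M (symdiff (mpt_preimg M (T g) (A n)) (mpt_preimg M (S g) (A n)))
        \<le> measure M (symdiff (mpt_preimg M (T g) (A n)) (A j')) + measure M (symdiff (A j') (mpt_preimg M (S g) (A n)))"
      by (intro symdiff_tri preimg_sets[OF Tm] preimg_sets[OF Sm] An)
    have b1: "measure M (symdiff (A j) (mpt_img M (S g) (A n))) = measure M (symdiff (mpt_img M (S g) (A n)) (A j))"
      by (rule arg_cong[where f="measure M"], rule symdiff_sym)
    have b2: "measure M (symdiff (A j') (mpt_preimg M (S g) (A n))) = measure M (symdiff (mpt_preimg M (S g) (A n)) (A j'))"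
      by (rule arg_cong[where f="measure M"], rule symdiff_sym)
    show ?thesis using a1 a2 b1 b2 conjunct1[OF t] conjunct2[OF t] conjunct1[OF s] conjunct2[OF s]
      by linarith
  qed
  have dclose: "dist_d M A (T g) (S g) \<le> 10 * \<delta>" if g: "g \<in> Cov F N" for g
  proof -
    have "dist_d M A (T g) (S g) \<le> 2 * (4*\<delta>) + 2*(1/2)^N"
      by (rule dist_d_bounds, drule close[OF g], erule conjE, linarith)
    then show ?thesis unfolding \<delta>_def by simp
  qed
  define s where "s i = (SUP g\<in>K i. dist_d M A (T g) (S g))" for i
  have s_range: "0 \<le> s i \<and> s i \<le> 4" if "i \<in> I" for i
  proof
    have Kin: "K i \<noteq> {}" by (rule bspec[OF Kne that])
    then obtain g where g: "g \<in> K i" by (meson ex_in_conv)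
    have bdd: "bdd_above ((\<lambda>g. dist_d M A (T g) (S g)) ` K i)"
      by (rule bdd_aboveI2[where M=4], rule conjunct2[OF dist_d_range])
    show "0 \<le> s i" unfolding s_def by (rule cSUP_upper2[OF bdd g], rule conjunct1[OF dist_d_range])
    show "s i \<le> 4" unfolding s_def
    proof (rule cSUP_least)
      show "K i \<noteq> {}" by (rule Kin)
      fix x assume "x \<in> K i"
      show "dist_d M A (T x) (S x) \<le> 4" by (rule conjunct2[OF dist_d_range])
    qed
  qed
  have s_small: "s i \<le> 10 * \<delta>" if "i \<in> I" "i \<le> N" for i
    unfolding s_def
  proof (rule cSUP_least)
    show "K i \<noteq> {}" by (rule bspec[OF Kne that(1)])
    fix x assume "x \<in> K i"
    then have "x \<in> Cov F N" using KC[OF that] by (rule rev_subsetD)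
    then show "dist_d M A (T x) (S x) \<le> 10 * \<delta>" by (rule dclose)
  qed
  have dG: "dist_dG M A K I T S \<le> 24 * \<delta>"
  proof -
    have "dist_dG M A K I T S \<le> 2 * (10 * \<delta>) + 4*(1/2)^N"
      unfolding dist_dG_def s_def[symmetric]
      by (rule dist_dG_bound) (use s_range s_small d0 in auto)
    then show ?thesis unfolding \<delta>_def by simp
  qed
  have aclose: "dist_a M A (T g) (S g) \<le> 12 * \<delta>" if g: "g \<in> \<Gamma>" for g
  proof -
    have "dist_a M A (T g) (S g) \<le> 4 * (2*\<delta>) + 4*(1/2)^N"
    proof (rule dist_a_bounds)
      fix n m assume n: "n \<le> N" and m: "m \<le> N"
      show "\<bar>measure M (mpt_img M (T g) (A n) \<inter> A m) - measure M (mpt_img M (S g) (A n) \<inter> A m)\<bar> \<le> 2 * \<delta>"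
      proof (cases "g \<in> Cov F N")
        case True
        have "\<bar>measure M (mpt_img M (T g) (A n) \<inter> A m) - measure M (mpt_img M (S g) (A n) \<inter> A m)\<bar>
            \<le> measure M (symdiff (mpt_img M (T g) (A n)) (mpt_img M (S g) (A n)))"
          by (intro inter_diff_le img_sets[OF Tm] img_sets[OF Sm] An)
        then show ?thesis using close[OF True n] by linarith
      next
        case False
        show ?thesis using Tmix[OF g False n m] Smix[OF g False n m] by linarith
      qed
    qed
    then show ?thesis unfolding \<delta>_def by simp
  qed
  have aG: "(SUP g\<in>\<Gamma>. dist_a M A (T g) (S g)) \<le> 12 * \<delta>"
    using Gne aclose by (intro cSUP_least) auto
  show ?thesis using dG aG unfolding dist_m_def \<delta>_def by simp
qed


lemma cell_exists:
  fixes K :: "nat \<Rightarrow> 'g::topological_group_add set"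
  assumes P: "prob_space M" and Ar: "range A \<subseteq> sets M"
    and dense: "\<forall>B\<in>sets M. \<forall>\<epsilon>>0. \<exists>i. measure M (symdiff (A i) B) < \<epsilon>"
    and Kc: "\<forall>i\<in>I. compact (K i)" and Bo: "\<forall>B\<in>\<B>. open B"
    and Bb: "\<forall>Op g. open Op \<longrightarrow> g \<in> Op \<longrightarrow> (\<exists>B\<in>\<B>. g \<in> B \<and> B \<subseteq> Op)"
    and T: "T \<in> mixing_actions M \<Gamma>"
  shows "\<exists>F. finite F \<and> F \<subseteq> \<B> \<times> UNIV \<and> T \<in> cell M A K I \<Gamma> N F"
proof -
  interpret prob_space M by (rule P)
  define \<delta> :: real where "\<delta> = (1/2)^N"
  have d0: "0 < \<delta>" unfolding \<delta>_def by simp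
  have An: "A n \<in> sets M" for n using Ar by auto
  have act: "is_action M T" and mix: "is_mixing M \<Gamma> T" using T unfolding mixing_actions_def by auto
  have Tm: "is_mpt M (T g)" for g using act unfolding is_action_def by auto
  define good where "good B n j j' \<longleftrightarrow> (\<forall>h\<in>B. measure M (symdiff (mpt_img M (T h) (A n)) (A j)) < \<delta> \<and>
         measure M (symdiff (mpt_preimg M (T h) (A n)) (A j')) < \<delta>)" for B n j j'
  have F1: "\<exists>B j j'. B \<in> \<B> \<and> g \<in> B \<and> good B n j j'" for g n
  proof -
    obtain j where j: "measure M (symdiff (A j) (mpt_img M (T g) (A n))) < \<delta>"
      using dense img_sets[OF Tm An] d0 by blast
    obtain j' where j': "measure M (symdiff (A j') (mpt_preimg M (T g) (A n))) < \<delta>"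
      using dense preimg_sets[OF Tm An] d0 by blast
    define Op where "Op = {h. measure M (symdiff (mpt_img M (T h) (A n)) (A j)) < \<delta>} \<inter>
        {h. measure M (symdiff (mpt_preimg M (T h) (A n)) (A j')) < \<delta>}"
    have "open Op" unfolding Op_def
      by (intro open_Int open_Collect_less img_cont[OF act An An] preimg_cont[OF act An An] continuous_on_const)
    moreover have "g \<in> Op" unfolding Op_def using j j' by (simp add: symdiff_sym)
    ultimately obtain B where B: "B \<in> \<B>" "g \<in> B" "B \<subseteq> Op" using Bb by blast
    have "good B n j j'" unfolding good_def using B(3) unfolding Op_def by blast
    then show ?thesis using B by blast
  qed
  have Cex: "\<exists>C. compact C \<and> (\<forall>g\<in>\<Gamma> - C. \<bar>measure M (mpt_img M (T g) (A n) \<inter> A m) - measure M (A n) * measure M (A m)\<bar> < \<delta>)" for n m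
    using mix An d0 unfolding is_mixing_def by blast
  define Cm where "Cm n m = (SOME C. compact C \<and> (\<forall>g\<in>\<Gamma> - C. \<bar>measure M (mpt_img M (T g) (A n) \<inter> A m) - measure M (A n) * measure M (A m)\<bar> < \<delta>))" for n m
  have Cm: "compact (Cm n m) \<and> (\<forall>g\<in>\<Gamma> - Cm n m. \<bar>measure M (mpt_img M (T g) (A n) \<inter> A m) - measure M (A n) * measure M (A m)\<bar> < \<delta>)" for n m
    unfolding Cm_def by (rule someI_ex[OF Cex])
  define Kset where "Kset = (\<Union>n\<in>{..N}. \<Union>m\<in>{..N}. Cm n m) \<union> (\<Union>i\<in>I\<inter>{..N}. K i)"
  have Ksc: "compact Kset" unfolding Kset_def using Cm Kc
    by (intro compact_Un compact_UN) auto
  define fam where "fam n = {(B,n,j,j') | B j j'. B \<in> \<B> \<and> good B n j j'}" for n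
  have ex: "\<exists>Fn. Fn \<subseteq> fam n \<and> finite Fn \<and> Kset \<subseteq> (\<Union>c\<in>Fn. fst c)" for n
  proof -
    have op: "open (fst c)" if "c \<in> fam n" for c using that Bo unfolding fam_def by auto
    have cov: "Kset \<subseteq> (\<Union>c\<in>fam n. fst c)"
    proof
      fix g assume "g \<in> Kset"
      obtain B j j' where "B \<in> \<B>" "g \<in> B" "good B n j j'" using F1 by blast
      then have "(B,n,j,j') \<in> fam n" "g \<in> fst (B,n,j,j')" unfolding fam_def by auto
      then show "g \<in> (\<Union>c\<in>fam n. fst c)" by blast
    qed
    obtain C' where "C' \<subseteq> fam n" "finite C'" "Kset \<subseteq> (\<Union>c\<in>C'. fst c)"
      using compactE_image[OF Ksc op cov] by blast
    then show ?thesis by blast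
  qed
  define Fs where "Fs n = (SOME Fn. Fn \<subseteq> fam n \<and> finite Fn \<and> Kset \<subseteq> (\<Union>c\<in>Fn. fst c))" for n
  have Fs: "Fs n \<subseteq> fam n \<and> finite (Fs n) \<and> Kset \<subseteq> (\<Union>c\<in>Fs n. fst c)" for n
    unfolding Fs_def by (rule someI_ex[OF ex])
  define F where "F = (\<Union>n\<in>{..N}. Fs n)"
  have fin: "finite F" unfolding F_def using Fs by auto
  have sub: "F \<subseteq> \<B> \<times> UNIV"
  proof
    fix c assume "c \<in> F"
    then obtain n where "c \<in> fam n" unfolding F_def using Fs by blast
    then show "c \<in> \<B> \<times> UNIV" unfolding fam_def by auto
  qed
  have KsCov: "Kset \<subseteq> Cov F N"
  proof
    fix g assume g: "g \<in> Kset"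
    show "g \<in> Cov F N" unfolding Cov_def
    proof (intro CollectI allI impI)
      fix n assume n: "n \<le> N"
      obtain c where c: "c \<in> Fs n" "g \<in> fst c" using Fs[of n] g by blast
      then have "c \<in> fam n" using Fs by blast
      then obtain B j j' where "c = (B,n,j,j')" unfolding fam_def by blast
      moreover have "c \<in> F" unfolding F_def using c n by blast
      ultimately show "\<exists>B j j'. (B, n, j, j') \<in> F \<and> g \<in> B" using c by auto
    qed
  qed
  have c1: "\<forall>B n j j'. (B,n,j,j') \<in> F \<longrightarrow> (\<forall>h\<in>B. measure M (symdiff (mpt_img M (T h) (A n)) (A j)) < (1/2)^N \<and>
         measure M (symdiff (mpt_preimg M (T h) (A n)) (A j')) < (1/2)^N)"
  proof (intro allI impI)
    fix B n j j' assume "(B,n,j,j') \<in> F"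
    then obtain k where "(B,n,j,j') \<in> fam k" unfolding F_def using Fs by blast
    then have "good B n j j'" unfolding fam_def by auto
    then show "\<forall>h\<in>B. measure M (symdiff (mpt_img M (T h) (A n)) (A j)) < (1/2)^N \<and>
         measure M (symdiff (mpt_preimg M (T h) (A n)) (A j')) < (1/2)^N"
      unfolding good_def \<delta>_def .
  qed
  have c2: "\<forall>g\<in>\<Gamma> - Cov F N. \<forall>n\<le>N. \<forall>m\<le>N.
         \<bar>measure M (mpt_img M (T g) (A n) \<inter> A m) - measure M (A n) * measure M (A m)\<bar> < (1/2)^N"
  proof (intro ballI allI impI)
    fix g n m assume g: "g \<in> \<Gamma> - Cov F N" and n: "n \<le> N" and m: "m \<le> N"
    then have "g \<notin> Kset" using KsCov by blast
    then have "g \<notin> Cm n m" unfolding Kset_def using n m by blast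
    then show "\<bar>measure M (mpt_img M (T g) (A n) \<inter> A m) - measure M (A n) * measure M (A m)\<bar> < (1/2)^N"
      using Cm[of n m] g unfolding \<delta>_def by blast
  qed
  have c3: "\<forall>i\<in>I. i \<le> N \<longrightarrow> K i \<subseteq> Cov F N"
    using KsCov unfolding Kset_def by blast
  have "T \<in> cell M A K I \<Gamma> N F" unfolding cell_def using T c1 c2 c3 by blast
  then show ?thesis using fin sub by blast
qed


theorem mainTheorem5:
  fixes M :: "'a measure" and A :: "nat \<Rightarrow> 'a set"
    and K :: "nat \<Rightarrow> 'g::{topological_group_add, t2_space, first_countable_topology} set"
    and I :: "nat set" and \<Gamma> :: "'g set"
  assumes "prob_space M" and "nonatomic M" and "lebesgue_space M"
    and "range A \<subseteq> sets M" and "sets M = sigma_sets (space M) (range A)"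
    and "\<forall>B\<in>sets M. \<forall>\<epsilon>>0. \<exists>i. measure M (symdiff (A i) B) < \<epsilon>"
    and "locally_compact_space (euclidean :: 'g topology)"
    and "\<forall>i\<in>I. compact (K i) \<and> interior (K i) \<noteq> {}"
    and "\<exists>S. S \<subseteq> (\<Union>i\<in>I. K i) \<and> generates_group S"
    and "\<not> (\<exists>C. compact C \<and> \<Gamma> \<subseteq> C)"
  shows "\<exists>D. countable D \<and> D \<subseteq> mixing_actions M \<Gamma> \<and>
    (\<forall>T\<in>mixing_actions M \<Gamma>. \<forall>\<epsilon>>0. \<exists>S\<in>D. dist_m M A K I \<Gamma> T S < \<epsilon>)"
proof -
  note P = assms(1) and Ar = assms(4) and dense = assms(6) and KI = assms(8) and gen = assms(9)
    and unb = assms(10)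
  have Kc: "\<forall>i\<in>I. compact (K i)" using KI by blast
  have Kne: "\<forall>i\<in>I. K i \<noteq> {}" using KI interior_subset by blast
  have Gne: "\<Gamma> \<noteq> {}" using unb compact_empty by blast
  obtain W :: "nat \<Rightarrow> 'g set" where W: "\<forall>k. compact (W k)" "(\<Union>k. W k) = UNIV"
    using sigma_compact_from_gen[OF Kc gen] by blast
  obtain \<B> :: "'g set set" where B: "countable \<B>" "\<forall>B\<in>\<B>. open B"
    "\<forall>Op g. open Op \<longrightarrow> g \<in> Op \<longrightarrow> (\<exists>B\<in>\<B>. g \<in> B \<and> B \<subseteq> Op)"
    using countable_base_from_sigma_compact[of W] W by blast
  define Fams where "Fams = {F. finite F \<and> F \<subseteq> \<B> \<times> (UNIV :: (nat \<times> nat \<times> nat) set)}"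
  have cF: "countable Fams" unfolding Fams_def
    by (intro countable_Collect_finite_subset countable_SIGMA B(1)) auto
  define Idx where "Idx = {(N, F). F \<in> Fams \<and> cell M A K I \<Gamma> N F \<noteq> {}}"
  have cI: "countable Idx"
    by (rule countable_subset[of _ "UNIV \<times> Fams"]) (use cF in \<open>auto simp: Idx_def\<close>)
  define rep where "rep = (\<lambda>(N, F). SOME T. T \<in> cell M A K I \<Gamma> N F)"
  define D where "D = rep ` Idx"
  have repc: "rep (N, F) \<in> cell M A K I \<Gamma> N F" if "(N, F) \<in> Idx" for N F
  proof -
    from that obtain x where "x \<in> cell M A K I \<Gamma> N F" unfolding Idx_def by auto
    then show ?thesis unfolding rep_def prod.case by (rule someI[where P="\<lambda>T. T \<in> cell M A K I \<Gamma> N F"])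
  qed
  have "countable D" unfolding D_def using cI by simp
  moreover have "D \<subseteq> mixing_actions M \<Gamma>"
  proof
    fix S assume "S \<in> D"
    then obtain N F where "(N,F) \<in> Idx" "S = rep (N,F)" unfolding D_def by auto
    then show "S \<in> mixing_actions M \<Gamma>" using repc unfolding cell_def by blast
  qed
  moreover have "\<exists>S\<in>D. dist_m M A K I \<Gamma> T S < \<epsilon>" if T: "T \<in> mixing_actions M \<Gamma>" and e: "\<epsilon> > 0" for T \<epsilon>
  proof -
    obtain N where N: "(1/2::real)^N < \<epsilon> / 36" using real_arch_pow_inv[of "\<epsilon>/36" "1/2"] e by auto
    obtain F where F: "finite F" "F \<subseteq> \<B> \<times> UNIV" "T \<in> cell M A K I \<Gamma> N F"
      using cell_exists[OF P Ar dense Kc B(2) B(3) T] by blast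
    have idx: "(N, F) \<in> Idx" unfolding Idx_def Fams_def using F by auto
    have "dist_m M A K I \<Gamma> T (rep (N,F)) \<le> 36 * (1/2)^N"
      by (rule cell_diam[OF P Ar Kne Gne F(3) repc[OF idx]])
    also have "\<dots> < \<epsilon>" using N by simp
    finally show ?thesis unfolding D_def using idx by blast
  qed
  ultimately show ?thesis by blast
qed


end
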